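(* Let $A$ and $Z$ be $n\times n$ complex matrices with $A$ positive semidefinite and $Z$ positive definite with largest eigenvalue $a$ and smallest eigenvalue $b$. Then $$\Vert AZ\Vert_\infty \le \frac{a+b}{2\sqrt{ab}}\,\rho(AZ) \quad\text{and}\quad \Vert AZ\Vert_1 \le \frac{a+b}{2\sqrt{ab}}\,{\rm Tr}\,AZ.$$
   Context: $\Vert\cdot\Vert_\infty$ is the operator norm (largest singular value), $\Vert\cdot\Vert_1$ is the trace norm (sum of singular values), $\rho(\cdot)$ is the spectral radius, and ${\rm Tr}$ is the trace. *)

theory Defs
  imports "Jordan_Normal_Form.Spectral_Radius" "Jordan_Normal_Form.Schur_Decomposition"
begin

definition mat_trace :: "complex mat \<Rightarrow> complex" where
  "mat_trace A = (\<Sum>i<dim_row A. A $$ (i, i))"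

definition hermitian_mat :: "nat \<Rightarrow> complex mat \<Rightarrow> bool" where
  "hermitian_mat n A \<longleftrightarrow> A \<in> carrier_mat n n \<and> mat_adjoint A = A"

definition psd_mat :: "nat \<Rightarrow> complex mat \<Rightarrow> bool" where
  "psd_mat n A \<longleftrightarrow> hermitian_mat n A \<and>
     (\<forall>v \<in> carrier_vec n. 0 \<le> Re (conjugate v \<bullet> (A *\<^sub>v v)))"

definition pd_mat :: "nat \<Rightarrow> complex mat \<Rightarrow> bool" where
  "pd_mat n A \<longleftrightarrow> hermitian_mat n A \<and>
     (\<forall>v \<in> carrier_vec n. v \<noteq> 0\<^sub>v n \<longrightarrow> 0 < Re (conjugate v \<bullet> (A *\<^sub>v v)))"

text \<open>Singular values: square roots of the eigenvalues of A^* A (counted with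
  algebraic multiplicity in the trace norm).\<close>
definition op_norm :: "complex mat \<Rightarrow> real" where
  "op_norm A = sqrt (Max (Re ` spectrum (mat_adjoint A * A)))"

definition trace_norm :: "complex mat \<Rightarrow> real" where
  "trace_norm A = (\<Sum>e\<in>spectrum (mat_adjoint A * A).
      real (order e (char_poly (mat_adjoint A * A))) * sqrt (Re e))"

end

theory Submission
  imports Defs
begin


lemma kant_real: fixes a b l r t :: real
  assumes a: "a > 0" and b: "b > 0" and l0: "0 \<le> l" and lr: "l \<le> r" and t: "t \<ge> 0"
  shows "(a + b)^2 / (4 * a * b) * r^2 - (a + b) * l * t + a * b * t^2 \<ge> 0"
proof -
  have ab: "4 * a * b > 0" using a b by simp
  have "l^2 \<le> r^2" using l0 lr by (simp add: power_mono)
  hence "(a + b)^2 / (4 * a * b) * l^2 \<le> (a + b)^2 / (4 * a * b) * r^2"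
    using ab by (intro mult_left_mono, auto)
  moreover have "(a + b)^2 / (4 * a * b) * l^2 - (a + b) * l * t + a * b * t^2 = ((a + b) * l - 2 * a * b * t)^2 / (4 * a * b)"
  proof -
    have a0: "a \<noteq> 0" and b0: "b \<noteq> 0" using a b by auto
    show ?thesis using a0 b0 by (simp add: field_simps power2_eq_square)
  qed
  moreover have "((a + b) * l - 2 * a * b * t)^2 / (4 * a * b) \<ge> 0" using ab by simp
  ultimately show ?thesis by linarith
qed

lemma kant_sqrt: fixes a b r :: real
  assumes a: "a > 0" and b: "b > 0" and r: "r \<ge> 0"
  shows "sqrt ((a + b)^2 / (4 * a * b) * r^2) = (a + b) / (2 * sqrt (a * b)) * r"
proof -
  have "sqrt ((a + b)^2 / (4 * a * b) * r^2) = sqrt ((a + b)^2) / sqrt (4 * (a * b)) * sqrt (r^2)"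
    by (simp add: real_sqrt_mult real_sqrt_divide mult.assoc)
  also have "\<dots> = (a + b) / (2 * sqrt (a * b)) * r" using a b r by (simp add: real_sqrt_mult)
  finally show ?thesis .
qed

lemma kant_final: fixes a b S T al P Q :: real
  assumes a: "a > 0" and b: "b > 0"
    and amgm: "2 * S \<le> sqrt (a * b) * P + Q / sqrt (a * b)"
    and P: "P \<le> al" and Q: "Q \<le> (a + b) * T - a * b * al"
  shows "S \<le> (a + b) / (2 * sqrt (a * b)) * T"
proof -
  define s where "s = sqrt (a * b)"
  have s: "s > 0" using a b unfolding s_def by simp
  have ss: "s * s = a * b" unfolding s_def using a b by simp
  have "2 * S \<le> s * al + ((a + b) * T - a * b * al) / s"
    using amgm P Q s unfolding s_def[symmetric]
    by (smt (verit) divide_right_mono mult_left_mono)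
  also have "\<dots> = (a + b) * T / s" using s ss by (simp add: field_simps)
  finally have "2 * S \<le> (a + b) * T / s" .
  thus ?thesis unfolding s_def[symmetric] using s by (simp add: field_simps)
qed


lemma adj_dims[simp]: "dim_row (mat_adjoint A) = dim_col A" "dim_col (mat_adjoint A) = dim_row A"
  unfolding mat_adjoint_def by auto

lemma adj_carrier[simp]: "A \<in> carrier_mat n m \<Longrightarrow> mat_adjoint A \<in> carrier_mat m n"
  by (metis adj_dims carrier_matD carrier_matI)

lemma adj_index[simp]: fixes A :: "complex mat" shows "i < dim_col A \<Longrightarrow> j < dim_row A \<Longrightarrow> mat_adjoint A $$ (i,j) = cnj (A $$ (j,i))"
  unfolding mat_adjoint_def by (auto simp: mat_of_rows_def)

lemma adj_mult: fixes A B :: "complex mat" assumes "A \<in> carrier_mat nr k" "B \<in> carrier_mat k nc"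
  shows "mat_adjoint (A * B) = mat_adjoint B * mat_adjoint A"
  by (rule eq_matI, insert assms, auto simp: scalar_prod_def cnj_sum mult.commute)

lemma adj_adj[simp]: fixes A :: "complex mat" shows "mat_adjoint (mat_adjoint A) = A"
  by (rule eq_matI, auto)

lemma adj_one[simp]: "mat_adjoint (1\<^sub>m n) = (1\<^sub>m n :: complex mat)"
  by (rule eq_matI, auto)

lemma adj_add: fixes A B :: "complex mat" assumes "A \<in> carrier_mat nr nc" "B \<in> carrier_mat nr nc"
  shows "mat_adjoint (A + B) = mat_adjoint A + mat_adjoint B"
  by (rule eq_matI, insert assms, auto)

lemma adj_minus: fixes A B :: "complex mat" assumes "A \<in> carrier_mat nr nc" "B \<in> carrier_mat nr nc"
  shows "mat_adjoint (A - B) = mat_adjoint A - mat_adjoint B"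
  by (rule eq_matI, insert assms, auto)

lemma adj_smult: fixes A :: "complex mat" shows "mat_adjoint (c \<cdot>\<^sub>m A) = cnj c \<cdot>\<^sub>m mat_adjoint A"
  by (rule eq_matI, auto)

lemma inner_adj: fixes A :: "complex mat" assumes A: "A \<in> carrier_mat n n" and v: "v \<in> carrier_vec n" and w: "w \<in> carrier_vec n"
  shows "conjugate v \<bullet> (A *\<^sub>v w) = conjugate (mat_adjoint A *\<^sub>v v) \<bullet> w"
proof -
  have "conjugate v \<bullet> (A *\<^sub>v w) = (\<Sum>i<n. cnj (v $ i) * (\<Sum>j<n. A $$ (i,j) * w $ j))"
    using A v w by (auto simp: scalar_prod_def lessThan_atLeast0)
  also have "\<dots> = (\<Sum>i<n. \<Sum>j<n. cnj (v $ i) * A $$ (i,j) * w $ j)"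
    by (simp add: sum_distrib_left mult.assoc)
  also have "\<dots> = (\<Sum>j<n. \<Sum>i<n. cnj (v $ i) * A $$ (i,j) * w $ j)"
    by (rule sum.swap)
  also have "\<dots> = conjugate (mat_adjoint A *\<^sub>v v) \<bullet> w"
    using A v w by (auto simp: scalar_prod_def lessThan_atLeast0 cnj_sum sum_distrib_left mult.commute mult.left_commute)
  finally show ?thesis .
qed


definition nv :: "complex vec \<Rightarrow> complex vec" where
  "nv w = complex_of_real (1 / sqrt (Re (w \<bullet>c w))) \<cdot>\<^sub>v w"

lemma nv_carrier[simp]: "w \<in> carrier_vec n \<Longrightarrow> nv w \<in> carrier_vec n"
  unfolding nv_def by auto

lemma cscalar_smult: fixes w u :: "complex vec"
  assumes "w \<in> carrier_vec n" "u \<in> carrier_vec n"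
  shows "(c \<cdot>\<^sub>v w) \<bullet>c (d \<cdot>\<^sub>v u) = c * cnj d * (w \<bullet>c u)"
  using assms by (simp add: conjugate_smult_vec)

lemma cscalar_self_real: fixes w :: "complex vec"
  shows "w \<bullet>c w = complex_of_real (Re (w \<bullet>c w))" "Re (w \<bullet>c w) \<ge> 0"
proof -
  have "0 \<le> w \<bullet>c w" by auto
  thus "w \<bullet>c w = complex_of_real (Re (w \<bullet>c w))" "Re (w \<bullet>c w) \<ge> 0"
    by (auto simp: less_eq_complex_def complex_eq_iff)
qed

lemma cscalar_self_pos: fixes w :: "complex vec"
  assumes "w \<in> carrier_vec n" "w \<noteq> 0\<^sub>v n"
  shows "Re (w \<bullet>c w) > 0"
proof -
  have "w \<bullet>c w \<noteq> 0" using assms conjugate_square_eq_0_vec[OF assms(1)] by auto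
  with cscalar_self_real[of w] show ?thesis
    by (metis less_eq_real_def of_real_0)
qed

lemma nv_unit: assumes "w \<in> carrier_vec n" "w \<noteq> 0\<^sub>v n"
  shows "nv w \<bullet>c nv w = 1"
proof -
  define r where "r = Re (w \<bullet>c w)"
  define c where "c = complex_of_real (1 / sqrt r)"
  have r: "r > 0" using cscalar_self_pos[OF assms] r_def by auto
  have "nv w \<bullet>c nv w = c * cnj c * (w \<bullet>c w)" unfolding nv_def c_def r_def
    by (rule cscalar_smult[OF assms(1) assms(1)])
  also have "w \<bullet>c w = complex_of_real r" using cscalar_self_real(1)[of w] r_def by simp
  also have "c * cnj c * complex_of_real r = complex_of_real ((1 / sqrt r) * (1 / sqrt r) * r)"
    unfolding c_def complex_cnj_complex_of_real of_real_mult ..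
  also have "(1 / sqrt r) * (1 / sqrt r) * r = 1" using r
    by (simp add: field_simps)
  finally show ?thesis by simp
qed

lemma nv_id: assumes "w \<bullet>c w = 1" shows "nv w = w"
  unfolding nv_def assms by simp

lemma nv_eigen: assumes A: "A \<in> carrier_mat n n" and ev: "eigenvector A v e"
  shows "eigenvector A (nv v) e"
proof -
  from ev A have v: "v \<in> carrier_vec n" "v \<noteq> 0\<^sub>v n" "A *\<^sub>v v = e \<cdot>\<^sub>v v"
    unfolding eigenvector_def by auto
  define c where "c = complex_of_real (1 / sqrt (Re (v \<bullet>c v)))"
  have c: "c \<noteq> 0" using cscalar_self_pos[OF v(1,2)] unfolding c_def by auto
  have "nv v = c \<cdot>\<^sub>v v" unfolding nv_def c_def by simp
  moreover have "c \<cdot>\<^sub>v v \<noteq> 0\<^sub>v n"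
  proof
    assume "c \<cdot>\<^sub>v v = 0\<^sub>v n"
    hence "(1/c) \<cdot>\<^sub>v (c \<cdot>\<^sub>v v) = 0\<^sub>v n" by auto
    hence "v = 0\<^sub>v n" using c by (simp add: smult_smult_assoc)
    thus False using v by auto
  qed
  moreover have "A *\<^sub>v (c \<cdot>\<^sub>v v) = e \<cdot>\<^sub>v (c \<cdot>\<^sub>v v)" using v A
    by (simp add: mult_mat_vec smult_smult_assoc mult.commute)
  ultimately show ?thesis using v A unfolding eigenvector_def by auto
qed


lemma adj_four_block_diag: fixes U :: "complex mat"
  assumes U: "U \<in> carrier_mat m m"
  shows "mat_adjoint (four_block_mat (1\<^sub>m 1) (0\<^sub>m 1 m) (0\<^sub>m m 1) U)
       = four_block_mat (1\<^sub>m 1) (0\<^sub>m 1 m) (0\<^sub>m m 1) (mat_adjoint U)"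
  by (rule eq_matI, insert U, auto)

lemma corthogonal_nv: assumes ws: "set ws \<subseteq> carrier_vec n" "corthogonal ws"
  shows "corthogonal (map nv ws)" "\<And>i. i < length ws \<Longrightarrow> map nv ws ! i \<bullet>c map nv ws ! i = 1"
proof -
  have nz: "ws ! i \<noteq> 0\<^sub>v n" if i: "i < length ws" for i
  proof
    assume "ws ! i = 0\<^sub>v n"
    hence "ws ! i \<bullet>c ws ! i = 0" by simp
    with corthogonalD[OF ws(2) i i] show False by simp
  qed
  have car: "ws ! i \<in> carrier_vec n" if "i < length ws" for i using ws that by auto
  show "map nv ws ! i \<bullet>c map nv ws ! i = 1" if "i < length ws" for i
    using nv_unit[OF car[OF that] nz[OF that]] that by simp
  show "corthogonal (map nv ws)"
  proof (rule corthogonalI)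
    fix i j assume i: "i < length (map nv ws)" and j: "j < length (map nv ws)"
    hence i: "i < length ws" and j: "j < length ws" by auto
    define ci where "ci = complex_of_real (1 / sqrt (Re (ws ! i \<bullet>c ws ! i)))"
    define cj where "cj = complex_of_real (1 / sqrt (Re (ws ! j \<bullet>c ws ! j)))"
    have ci: "ci \<noteq> 0" using cscalar_self_pos[OF car[OF i] nz[OF i]] unfolding ci_def by auto
    have cj: "cj \<noteq> 0" using cscalar_self_pos[OF car[OF j] nz[OF j]] unfolding cj_def by auto
    have "map nv ws ! i \<bullet>c map nv ws ! j = ci * cnj cj * (ws ! i \<bullet>c ws ! j)"
      using i j unfolding ci_def cj_def nv_def by (simp add: cscalar_smult[OF car[OF i] car[OF j]])
    thus "(map nv ws ! i \<bullet>c map nv ws ! j = 0) = (i \<noteq> j)"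
      using ci cj corthogonalD[OF ws(2) i j] by auto
  qed
qed

theorem unitary_schur:
  assumes "(A::complex mat) \<in> carrier_mat n n"
      and "char_poly A = (\<Prod> (e :: complex) \<leftarrow> es. [:- e, 1:])"
  shows "\<exists>B U. similar_mat_wit A B U (mat_adjoint U) \<and> upper_triangular B \<and> diag_mat B = es"
  using assms
proof (induct es arbitrary: n A)
  case Nil
  with degree_monic_char_poly[of A n] have n: "n = 0" by auto
  have "similar_mat_wit A A (1\<^sub>m n) (mat_adjoint (1\<^sub>m n))"
    using similar_mat_wit_refl[OF Nil(1)] by simp
  moreover have "upper_triangular A" "diag_mat A = []"
    using Nil(1) n by (auto simp: diag_mat_def upper_triangular_def)
  ultimately show ?case by blast
next
  case (Cons e es n A)
  let ?n1 = "n - 1"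
  from Cons have A: "A \<in> carrier_mat n n" and dim: "dim_row A = n" by auto
  let ?cp = "char_poly A"
  from Cons(3)
  have cp: "?cp = [: -e, 1 :] * (\<Prod>e \<leftarrow> es. [:- e, 1:])" by auto
  have mon: "monic (\<Prod>e\<leftarrow> es. [:- e, 1:])" by (rule monic_prod_list, auto)
  have deg: "degree ?cp = Suc (degree (\<Prod>e\<leftarrow> es. [:- e, 1:]))" unfolding cp
    by (subst degree_mult_eq, insert mon, auto)
  with degree_monic_char_poly[OF A] have n: "n \<noteq> 0" by auto
  have e: "eigenvalue A e" 
    unfolding eigenvalue_root_char_poly[OF A] cp by simp
  define v where "v = nv (find_eigenvector A e)"
  from nv_eigen[OF A find_eigenvector[OF A e]] have ev: "eigenvector A v e" unfolding v_def .
  from this[unfolded eigenvector_def]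
  have v[simp]: "v \<in> carrier_vec n" and v0: "v \<noteq> 0\<^sub>v n" using A by auto
  have vunit: "v \<bullet>c v = 1" unfolding v_def
    using nv_unit find_eigenvector[OF A e] A unfolding eigenvector_def by auto
  define b where "b = basis_completion v"
  define ws0 where "ws0 = gram_schmidt n b"
  define ws where "ws = map nv ws0"
  define W where "W = mat_of_cols n ws"
  define W' where "W' = mat_adjoint W"
  define A' where "A' = W' * A * W"
  interpret cof_vec_space n "TYPE(complex)" .
  from basis_completion[OF v v0, folded b_def]
  have span_b: "span (set b) = carrier_vec n" and dist_b: "distinct b" 
    and indep: "\<not> lin_dep (set b)" and b: "set b \<subseteq> carrier_vec n" and hdb: "hd b = v" 
    and len_b: "length b = n" by auto
  from hdb len_b n obtain vs where bv: "b = v # vs" by (cases b, auto)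
  from gram_schmidt_result[OF b dist_b indep refl, folded ws0_def]
  have ws0: "set ws0 \<subseteq> carrier_vec n" "corthogonal ws0" "length ws0 = n" 
    by (auto simp: len_b)
  from gram_schmidt_hd[OF v, of vs, folded bv] have hdws0: "hd ws0 = v" unfolding ws0_def .
  have ws: "set ws \<subseteq> carrier_vec n" "corthogonal ws" "length ws = n"
    using corthogonal_nv[OF ws0(1,2)] ws0 unfolding ws_def by auto
  have unit: "\<And>i. i < n \<Longrightarrow> ws ! i \<bullet>c ws ! i = 1"
    using corthogonal_nv[OF ws0(1,2)] ws0 unfolding ws_def by auto
  have hdws: "hd ws = v" unfolding ws_def using hdws0 ws0 n nv_id[OF vunit]
    by (cases ws0, auto)
  have W: "W \<in> carrier_mat n n"
    using ws unfolding W_def using mat_of_cols_carrier(1)[of n ws] by auto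
  have W'eq: "W' = corthogonal_inv W"
  proof -
    have "map vec_inv ws = map conjugate ws"
    proof (rule map_cong[OF refl])
      fix w assume w: "w \<in> set ws"
      then obtain i where i: "i < n" and wi: "w = ws ! i" using ws by (auto simp: in_set_conv_nth)
      show "vec_inv w = conjugate w" unfolding vec_inv_def wi unit[OF i] by simp
    qed
    note eq = this
    have cW: "cols W = ws" using ws unfolding W_def by simp
    have dW: "dim_row W = n" using W by auto
    show ?thesis unfolding W'_def corthogonal_inv_def mat_adjoint_def dW cW eq ..
  qed
  have W': "W' \<in> carrier_mat n n" unfolding W'_def using W by simp
  have orth_W: "corthogonal_mat W" using orthogonal_mat_of_cols ws unfolding W_def.
  from corthogonal_inv_result[OF orth_W] 
  have W'W: "inverts_mat W' W" unfolding W'eq .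
  hence WW': "inverts_mat W W'" using mat_mult_left_right_inverse[OF W' W] W' W
    unfolding inverts_mat_def by auto
  have A': "A' \<in> carrier_mat n n" using W W' A unfolding A'_def by auto
  have A'A_wit: "similar_mat_wit A' A W' W"
    by (rule similar_mat_witI[of _ _ n], insert W W' A A' W'W WW', auto simp: A'_def
    inverts_mat_def)
  from similar_mat_wit_sym[OF A'A_wit] have simAA': "similar_mat_wit A A' W W'" by auto
  have eigen[simp]: "A *\<^sub>v v = e \<cdot>\<^sub>v v"
    using ev unfolding eigenvector_def by auto
  let ?f = "(\<lambda> i. if i = 0 then e else 0)"
  have col0: "col A' 0 = vec n ?f"
    unfolding A'_def W'eq W_def
    using corthogonal_col_ev_0[OF A v v0 eigen n hdws ws].
  from A' n have "dim_row A' = 1 + ?n1" "dim_col A' = 1 + ?n1" by auto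
  obtain A1 A2 A0 A3 where splitA': "split_block A' 1 1 = (A1,A2,A0,A3)"
    by (cases "split_block A' 1 1", auto)
  from split_block[OF splitA' \<open>dim_row A' = 1 + ?n1\<close> \<open>dim_col A' = 1 + ?n1\<close>] have A2: "A2 \<in> carrier_mat 1 ?n1"
    and A3: "A3 \<in> carrier_mat ?n1 ?n1" 
    and A'block: "A' = four_block_mat A1 A2 A0 A3" by auto
  have A1id: "A1 = mat 1 1 (\<lambda> _. e)"
    using splitA'[unfolded split_block_def Let_def] arg_cong[OF col0, of "\<lambda> v. v $ 0"] A' n
    by (auto simp: col_def)
  have A1: "A1 \<in> carrier_mat 1 1" unfolding A1id by auto
  {
    fix i
    assume "i < ?n1"
    with arg_cong[OF col0, of "\<lambda> v. v $ Suc i"] A'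
    have "A' $$ (Suc i, 0) = 0" by auto
  } note A'0 = this
  have A0id: "A0 = 0\<^sub>m ?n1 1"
    using splitA'[unfolded split_block_def Let_def] A'0 A' by auto
  have A0: "A0 \<in> carrier_mat ?n1 1" unfolding A0id by auto
  have simAAs: "similar_mat A A'" using simAA' unfolding similar_mat_def by blast
  from Cons(3) char_poly_similar[OF simAAs]
  have cp: "char_poly A' = [: -e,1 :] * (\<Prod> e \<leftarrow> es. [:- e, 1:])" by simp
  also have "char_poly A' = char_poly A1 * char_poly A3" 
    unfolding A'block A0id
    by (rule char_poly_four_block_zeros_col[OF A1 A2 A3])
  also have "char_poly A1 = [: -e,1 :]"
    by (simp add: A1id char_poly_defs det_def sign_def)
  finally have cp: "char_poly A3 = (\<Prod> e \<leftarrow> es. [:- e, 1:])"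
    by (metis mult_cancel_left pCons_eq_0_iff zero_neq_one)
  from Cons(1)[OF A3 cp] obtain B U3 where
    simIH: "similar_mat_wit A3 B U3 (mat_adjoint U3)" and ut: "upper_triangular B" and diag: "diag_mat B = es" by auto
  from similar_mat_witD2[OF A3 simIH] 
  have B: "B \<in> carrier_mat ?n1 ?n1" and P': "U3 \<in> carrier_mat ?n1 ?n1"
    and PQ': "U3 * mat_adjoint U3 = 1\<^sub>m ?n1" by auto
  let ?P' = "four_block_mat (1\<^sub>m 1) (0\<^sub>m 1 ?n1) (0\<^sub>m ?n1 1) U3"
  let ?Q' = "four_block_mat (1\<^sub>m 1) (0\<^sub>m 1 ?n1) (0\<^sub>m ?n1 1) (mat_adjoint U3)"
  define C where "C = four_block_mat A1 (A2 * U3) A0 B"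
  have A0_eq: "A0 = U3 * A0 * 1\<^sub>m 1" unfolding A0id using P' by auto
  have "1\<^sub>m 1 * (A2 * U3) * mat_adjoint U3 = A2 * (U3 * mat_adjoint U3)"
    using A2 P' by (simp add: assoc_mult_mat[of A2 1 ?n1 U3 ?n1 _ ?n1])
  also have "\<dots> = A2" using PQ' A2 by simp
  finally have A2eq: "A2 = 1\<^sub>m 1 * (A2 * U3) * mat_adjoint U3" by simp
  have simA'C: "similar_mat_wit A' C ?P' ?Q'" unfolding A'block C_def
    by (rule similar_mat_wit_four_block[OF similar_mat_wit_refl[OF A1] simIH A2eq A0_eq A1 A3 A0],
    insert PQ' A2 P', auto)
  have ut1: "upper_triangular A1" unfolding A1id by auto
  have ut: "upper_triangular C" unfolding C_def A0id
    by (intro upper_triangular_four_block[OF _ B ut1 ut], auto simp: A1id)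
  from A1id have diagA1: "diag_mat A1 = [e]" unfolding diag_mat_def by auto
  from diag_four_block_mat[OF A1 B] have diag: "diag_mat C = e # es" unfolding diag diagA1 C_def by simp
  have adjP: "mat_adjoint (W * ?P') = ?Q' * W'"
  proof -
    have Pc: "?P' \<in> carrier_mat n n" using P' n by auto
    show ?thesis unfolding adj_mult[OF W Pc] adj_four_block_diag[OF P'] W'_def by (rule refl)
  qed
  from similar_mat_wit_trans[OF simAA' simA'C] have "similar_mat_wit A C (W * ?P') (mat_adjoint (W * ?P'))"
    unfolding adjP .
  with ut diag show ?case by blast
qed


definition dmat :: "nat \<Rightarrow> (nat \<Rightarrow> real) \<Rightarrow> complex mat" where
  "dmat n d = mat n n (\<lambda>(i,j). if i = j then complex_of_real (d i) else 0)"

lemma dmat_carrier[simp]: "dmat n d \<in> carrier_mat n n"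
  unfolding dmat_def by auto

lemma dmat_index[simp]: "i < n \<Longrightarrow> j < n \<Longrightarrow> dmat n d $$ (i,j) = (if i = j then complex_of_real (d i) else 0)"
  "dim_row (dmat n d) = n" "dim_col (dmat n d) = n"
  unfolding dmat_def by auto

lemma dmat_mult: "dmat n d * dmat n e = dmat n (\<lambda>i. d i * e i)"
proof (rule eq_matI)
  fix i j assume i: "i < dim_row (dmat n (\<lambda>i. d i * e i))" and j: "j < dim_col (dmat n (\<lambda>i. d i * e i))"
  hence i: "i < n" and j: "j < n" by auto
  have "(dmat n d * dmat n e) $$ (i,j) = (\<Sum>k\<in>{0..<n}. dmat n d $$ (i,k) * dmat n e $$ (k,j))"
    using i j by (simp add: scalar_prod_def)
  also have "\<dots> = (\<Sum>k\<in>{0..<n}. if k = i then dmat n d $$ (i,k) * dmat n e $$ (k,j) else 0)"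
    by (rule sum.cong, insert i j, auto)
  also have "\<dots> = dmat n d $$ (i,i) * dmat n e $$ (i,j)" using i by simp
  also have "\<dots> = dmat n (\<lambda>i. d i * e i) $$ (i,j)" using i j by auto
  finally show "(dmat n d * dmat n e) $$ (i,j) = dmat n (\<lambda>i. d i * e i) $$ (i,j)" .
qed auto

lemma dmat_add: "dmat n d + dmat n e = dmat n (\<lambda>i. d i + e i)"
  by (rule eq_matI, auto)

lemma dmat_minus: "dmat n d - dmat n e = dmat n (\<lambda>i. d i - e i)"
  by (rule eq_matI, auto)

lemma dmat_smult: "complex_of_real c \<cdot>\<^sub>m dmat n d = dmat n (\<lambda>i. c * d i)"
  by (rule eq_matI, auto)

lemma dmat_one: "dmat n (\<lambda>_. 1) = 1\<^sub>m n"
  by (rule eq_matI, auto)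

lemma dmat_adj: "mat_adjoint (dmat n d) = dmat n d"
  by (rule eq_matI, auto)

definition qf :: "complex mat \<Rightarrow> complex vec \<Rightarrow> complex" where
  "qf M v = conjugate v \<bullet> (M *\<^sub>v v)"

definition nsq :: "complex vec \<Rightarrow> real" where
  "nsq v = Re (conjugate v \<bullet> v)"

lemma conj_self_real: fixes v :: "complex vec"
  shows "conjugate v \<bullet> v = complex_of_real (nsq v)" "nsq v \<ge> 0"
proof -
  have "conjugate v \<bullet> v = v \<bullet>c v"
    by (rule comm_scalar_prod[of _ "dim_vec v"], auto)
  thus "conjugate v \<bullet> v = complex_of_real (nsq v)" "nsq v \<ge> 0"
    using cscalar_self_real[of v] unfolding nsq_def by auto
qed

lemma nsq_pos: assumes "v \<in> carrier_vec n" "v \<noteq> 0\<^sub>v n" shows "nsq v > 0"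
proof -
  have "conjugate v \<bullet> v = v \<bullet>c v"
    by (rule comm_scalar_prod[of _ n], insert assms, auto)
  thus ?thesis using cscalar_self_pos[OF assms] unfolding nsq_def by auto
qed

lemma qf_dmat: assumes y: "y \<in> carrier_vec n"
  shows "qf (dmat n d) y = complex_of_real (\<Sum>i<n. d i * (cmod (y $ i))^2)"
proof -
  have "qf (dmat n d) y = (\<Sum>i<n. cnj (y $ i) * (complex_of_real (d i) * y $ i))"
  proof -
    have "dmat n d *\<^sub>v y = vec n (\<lambda>i. complex_of_real (d i) * y $ i)"
    proof (rule eq_vecI)
      fix i assume "i < dim_vec (vec n (\<lambda>i. complex_of_real (d i) * y $ i))"
      hence i: "i < n" by auto
      have "(dmat n d *\<^sub>v y) $ i = (\<Sum>k\<in>{0..<n}. dmat n d $$ (i,k) * y $ k)"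
        using i y by (auto simp: scalar_prod_def)
      also have "\<dots> = (\<Sum>k\<in>{0..<n}. if k = i then dmat n d $$ (i,k) * y $ k else 0)"
        by (rule sum.cong, insert i, auto)
      finally show "(dmat n d *\<^sub>v y) $ i = vec n (\<lambda>i. complex_of_real (d i) * y $ i) $ i" using i by simp
    qed auto
    thus ?thesis unfolding qf_def using y by (auto simp: scalar_prod_def lessThan_atLeast0)
  qed
  also have "\<dots> = (\<Sum>i<n. complex_of_real (d i * (cmod (y $ i))^2))"
  proof (rule sum.cong[OF refl])
    fix i
    have "cnj (y $ i) * y $ i = complex_of_real ((cmod (y $ i))^2)"
      using complex_norm_square[of "y $ i"] by (simp add: mult.commute)
    thus "cnj (y $ i) * (complex_of_real (d i) * y $ i) = complex_of_real (d i * (cmod (y $ i))^2)"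
      by (metis (no_types, lifting) mult.left_commute of_real_mult)
  qed
  also have "\<dots> = complex_of_real (\<Sum>i<n. d i * (cmod (y $ i))^2)" by simp
  finally show ?thesis .
qed

lemma qf_dmat_nonneg: assumes y: "y \<in> carrier_vec n" and d: "\<And>i. i < n \<Longrightarrow> d i \<ge> 0"
  shows "Re (qf (dmat n d) y) \<ge> 0"
  unfolding qf_dmat[OF y] using d by (auto intro!: sum_nonneg)

lemma qf_conj: assumes R: "R \<in> carrier_mat n n" and M: "M \<in> carrier_mat n n" and v: "v \<in> carrier_vec n"
  shows "qf (mat_adjoint R * M * R) v = qf M (R *\<^sub>v v)"
proof -
  have "mat_adjoint R * M * R *\<^sub>v v = (mat_adjoint R * M) *\<^sub>v (R *\<^sub>v v)"
    using R M v by (intro assoc_mult_mat_vec[of _ n n _ n], auto)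
  also have "\<dots> = mat_adjoint R *\<^sub>v (M *\<^sub>v (R *\<^sub>v v))"
    using R M v by (intro assoc_mult_mat_vec[of _ n n _ n], auto)
  finally have "mat_adjoint R * M * R *\<^sub>v v = mat_adjoint R *\<^sub>v (M *\<^sub>v (R *\<^sub>v v))" .
  thus ?thesis unfolding qf_def using inner_adj[of "mat_adjoint R" n v "M *\<^sub>v (R *\<^sub>v v)"] R M v by simp
qed

lemma qf_add: assumes "M \<in> carrier_mat n n" "N \<in> carrier_mat n n" "v \<in> carrier_vec n"
  shows "qf (M + N) v = qf M v + qf N v"
  unfolding qf_def using assms by (simp add: add_mult_distrib_mat_vec scalar_prod_add_distrib[of _ n])

lemma qf_minus: assumes "M \<in> carrier_mat n n" "N \<in> carrier_mat n n" "v \<in> carrier_vec n"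
  shows "qf (M - N) v = qf M v - qf N v"
  unfolding qf_def using assms by (simp add: minus_mult_distrib_mat_vec scalar_prod_minus_distrib[of _ n])

lemma smult_mat_vec: assumes "M \<in> carrier_mat n n" "v \<in> carrier_vec n"
  shows "(c \<cdot>\<^sub>m M) *\<^sub>v v = c \<cdot>\<^sub>v (M *\<^sub>v (v :: complex vec))"
  by (rule eq_vecI, insert assms, auto simp: scalar_prod_def sum_distrib_left mult.assoc)

lemma qf_smult: assumes "M \<in> carrier_mat n n" "v \<in> carrier_vec n"
  shows "qf (c \<cdot>\<^sub>m M) v = c * qf M v"
  unfolding qf_def using assms by (simp add: smult_mat_vec)

lemma qf_one: assumes "v \<in> carrier_vec n" shows "qf (1\<^sub>m n) v = complex_of_real (nsq v)"
  unfolding qf_def using assms conj_self_real(1)[of v] by simp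

lemma qf_adj_mult: assumes R: "R \<in> carrier_mat n n" and v: "v \<in> carrier_vec n"
  shows "qf (mat_adjoint R * R) v = complex_of_real (nsq (R *\<^sub>v v))"
  using qf_conj[OF R _ v, of "1\<^sub>m n"] R v qf_one[of "R *\<^sub>v v" n] by simp


definition udecomp :: "nat \<Rightarrow> complex mat \<Rightarrow> complex mat \<Rightarrow> (nat \<Rightarrow> real) \<Rightarrow> bool" where
  "udecomp n M U d \<longleftrightarrow> U \<in> carrier_mat n n \<and> mat_adjoint U * U = 1\<^sub>m n \<and> U * mat_adjoint U = 1\<^sub>m n
     \<and> M = U * dmat n d * mat_adjoint U"

lemma prod_list_upt_conv: "(\<Prod>i\<leftarrow>[0..<n]. f i) = (\<Prod>i<n. f i)"
  by (induct n, auto simp: mult.commute)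

theorem hermitian_decomp:
  assumes "hermitian_mat n M"
  shows "\<exists>U d. udecomp n M U d \<and> char_poly M = (\<Prod>i<n. [:- complex_of_real (d i), 1:])"
proof -
  from assms have M: "M \<in> carrier_mat n n" and adjM: "mat_adjoint M = M"
    unfolding hermitian_mat_def by auto
  from char_poly_factorized[OF M] obtain es where cp: "char_poly M = (\<Prod> a \<leftarrow> es. [:- a, 1:])" by auto
  from unitary_schur[OF M cp] obtain B U where
    sim: "similar_mat_wit M B U (mat_adjoint U)" and ut: "upper_triangular B" and diag: "diag_mat B = es"
    by auto
  from similar_mat_witD2[OF M sim] have B: "B \<in> carrier_mat n n" and U: "U \<in> carrier_mat n n"
    and UU: "U * mat_adjoint U = 1\<^sub>m n" "mat_adjoint U * U = 1\<^sub>m n" by auto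
  have MB: "M = U * B * mat_adjoint U" using sim unfolding similar_mat_wit_def Let_def by blast
  have Ua: "mat_adjoint U \<in> carrier_mat n n" using U by simp
  have "mat_adjoint U * M * U = (mat_adjoint U * U) * B * (mat_adjoint U * U)"
    unfolding MB using U B Ua by (simp add: assoc_mult_mat[of _ n n _ n _ n] mult_carrier_mat[of _ n n])
  also have "\<dots> = B" using UU B by simp
  finally have BM: "B = mat_adjoint U * M * U" by simp
  have adjB: "mat_adjoint B = B"
    unfolding BM using U M Ua
    by (simp add: adj_mult[of _ n n _ n] adjM assoc_mult_mat[of _ n n _ n _ n])
  define d where "d i = Re (B $$ (i,i))" for i
  have Bd: "B = dmat n d"
  proof (rule eq_matI)
    fix i j assume "i < dim_row (dmat n d)" "j < dim_col (dmat n d)"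
    hence i: "i < n" and j: "j < n" by auto
    have sym: "B $$ (i,j) = cnj (B $$ (j,i))"
      using arg_cong[OF adjB, of "\<lambda>X. X $$ (i,j)"] B i j by simp
    show "B $$ (i,j) = dmat n d $$ (i,j)"
    proof (cases "i = j")
      case True
      hence "Im (B $$ (i,i)) = 0" using sym by (metis Im_complex_of_real Reals_cnj_iff complex_is_Real_iff)
      thus ?thesis using True i by (simp add: d_def complex_eq_iff)
    next
      case False
      show ?thesis
      proof (cases "j < i")
        case True thus ?thesis using ut i j B False by auto
      next
        case False
        hence "i < j" using \<open>i \<noteq> j\<close> by auto
        hence "B $$ (j,i) = 0" using ut j B by auto
        thus ?thesis using sym i j \<open>i \<noteq> j\<close> by simp
      qed
    qed
  qed (insert B, auto)
  have "udecomp n M U d" unfolding udecomp_def using U UU MB Bd by auto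
  moreover have "char_poly M = (\<Prod>i<n. [:- complex_of_real (d i), 1:])"
  proof -
    have "es = map (\<lambda>i. complex_of_real (d i)) [0..<n]"
      unfolding diag[symmetric] diag_mat_def Bd by auto
    thus ?thesis unfolding cp by (simp add: prod_list_upt_conv[symmetric] comp_def)
  qed
  ultimately show ?thesis by blast
qed


context
  fixes n :: nat and U :: "complex mat"
  assumes U: "U \<in> carrier_mat n n" and UU1: "mat_adjoint U * U = 1\<^sub>m n" and UU2: "U * mat_adjoint U = 1\<^sub>m n"
begin

lemma Ua: "mat_adjoint U \<in> carrier_mat n n" using U by simp

lemma ud_intro: "udecomp n (U * dmat n d * mat_adjoint U) U d"
  unfolding udecomp_def using U UU1 UU2 by auto

lemma ud_mult_eq: "(U * dmat n d * mat_adjoint U) * (U * dmat n e * mat_adjoint U) = U * dmat n (\<lambda>i. d i * e i) * mat_adjoint U"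
proof -
  have "(U * dmat n d * mat_adjoint U) * (U * dmat n e * mat_adjoint U) = U * (dmat n d * (mat_adjoint U * U) * dmat n e) * mat_adjoint U"
    using U Ua by (simp add: assoc_mult_mat[of _ n n _ n _ n] mult_carrier_mat[of _ n n])
  also have "\<dots> = U * dmat n (\<lambda>i. d i * e i) * mat_adjoint U" unfolding UU1 by (simp add: dmat_mult)
  finally show ?thesis .
qed

lemma ud_add_eq: "U * dmat n d * mat_adjoint U + U * dmat n e * mat_adjoint U = U * dmat n (\<lambda>i. d i + e i) * mat_adjoint U"
proof -
  have "U * dmat n d * mat_adjoint U + U * dmat n e * mat_adjoint U = U * (dmat n d + dmat n e) * mat_adjoint U"
    using U Ua by (simp add: mult_add_distrib_mat[where nr=n and n=n and nc=n] add_mult_distrib_mat[where nr=n and n=n and nc=n])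
  thus ?thesis by (simp add: dmat_add)
qed

lemma ud_minus_eq: "U * dmat n d * mat_adjoint U - U * dmat n e * mat_adjoint U = U * dmat n (\<lambda>i. d i - e i) * mat_adjoint U"
proof -
  have "U * dmat n d * mat_adjoint U - U * dmat n e * mat_adjoint U = U * (dmat n d - dmat n e) * mat_adjoint U"
    using U Ua by (simp add: mult_minus_distrib_mat[where nr=n and n=n and nc=n] minus_mult_distrib_mat[where nr=n and n=n and nc=n])
  thus ?thesis by (simp add: dmat_minus)
qed

lemma ud_smult_eq: "complex_of_real c \<cdot>\<^sub>m (U * dmat n d * mat_adjoint U) = U * dmat n (\<lambda>i. c * d i) * mat_adjoint U"
proof -
  have "complex_of_real c \<cdot>\<^sub>m (U * dmat n d * mat_adjoint U) = U * (complex_of_real c \<cdot>\<^sub>m dmat n d) * mat_adjoint U"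
    using U Ua by (simp add: mult_smult_distrib[where nr=n and n=n and nc=n] mult_smult_assoc_mat[where nr=n and n=n and nc=n])
  thus ?thesis by (simp add: dmat_smult)
qed

lemma ud_one_eq: "1\<^sub>m n = U * dmat n (\<lambda>_. 1) * mat_adjoint U"
  unfolding dmat_one using U UU2 by simp

lemma ud_adj_eq: "mat_adjoint (U * dmat n d * mat_adjoint U) = U * dmat n d * mat_adjoint U"
  using U Ua by (simp add: adj_mult[of _ n n _ n] dmat_adj assoc_mult_mat[of _ n n _ n _ n] mult_carrier_mat[of _ n n])

lemma ud_qf: assumes v: "v \<in> carrier_vec n"
  shows "qf (U * dmat n d * mat_adjoint U) v = qf (dmat n d) (mat_adjoint U *\<^sub>v v)"
  using qf_conj[OF Ua dmat_carrier v, of d] by simp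

lemma ud_qf_nonneg: assumes v: "v \<in> carrier_vec n" and d: "\<And>i. i < n \<Longrightarrow> d i \<ge> 0"
  shows "Re (qf (U * dmat n d * mat_adjoint U) v) \<ge> 0"
  unfolding ud_qf[OF v] by (rule qf_dmat_nonneg[OF _ d], insert v Ua, auto)

lemma row_adj: fixes A :: "complex mat" shows "i < dim_col A \<Longrightarrow> row (mat_adjoint A) i = conjugate (col A i)"
  by (rule eq_vecI, auto)

lemma ud_col: assumes i: "i < n"
  shows "(U * dmat n d * mat_adjoint U) *\<^sub>v col U i = complex_of_real (d i) \<cdot>\<^sub>v col U i"
    "col U i \<in> carrier_vec n" "nsq (col U i) = 1" "col U i \<noteq> 0\<^sub>v n"
    "qf (U * dmat n d * mat_adjoint U) (col U i) = complex_of_real (d i)"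
proof -
  show c: "col U i \<in> carrier_vec n" using U i by auto
  have "conjugate (col U i) \<bullet> col U i = (mat_adjoint U * U) $$ (i,i)"
    using U i by (simp add: row_adj)
  hence cc: "conjugate (col U i) \<bullet> col U i = 1" unfolding UU1 using i by simp
  thus n1: "nsq (col U i) = 1" unfolding nsq_def by simp
  show "col U i \<noteq> 0\<^sub>v n" using n1 c by (auto simp: nsq_def)
  have "(U * dmat n d * mat_adjoint U) * U = U * dmat n d * (mat_adjoint U * U)"
    using U Ua by (simp add: assoc_mult_mat[of _ n n _ n _ n] mult_carrier_mat[of _ n n])
  also have "\<dots> = U * dmat n d" using U UU1 by simp
  finally have eq: "(U * dmat n d * mat_adjoint U) * U = U * dmat n d" .
  have "(U * dmat n d * mat_adjoint U) *\<^sub>v col U i = col ((U * dmat n d * mat_adjoint U) * U) i"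
    by (rule col_mult2[symmetric, of _ n n _ n], insert U Ua i, auto)
  also have "\<dots> = col (U * dmat n d) i" unfolding eq ..
  also have "\<dots> = complex_of_real (d i) \<cdot>\<^sub>v col U i"
  proof (rule eq_vecI)
    fix j assume "j < dim_vec (complex_of_real (d i) \<cdot>\<^sub>v col U i)"
    hence j: "j < n" using U by auto
    have "col (U * dmat n d) i $ j = (\<Sum>k\<in>{0..<n}. U $$ (j,k) * dmat n d $$ (k,i))"
      using U i j by (simp add: scalar_prod_def)
    also have "\<dots> = (\<Sum>k\<in>{0..<n}. if k = i then U $$ (j,k) * dmat n d $$ (k,i) else 0)"
      by (rule sum.cong, insert i j, auto)
    also have "\<dots> = U $$ (j,i) * complex_of_real (d i)" using i by simp
    finally show "col (U * dmat n d) i $ j = (complex_of_real (d i) \<cdot>\<^sub>v col U i) $ j"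
      using U i j by (simp add: mult.commute)
  qed (insert U i, auto)
  finally show ev: "(U * dmat n d * mat_adjoint U) *\<^sub>v col U i = complex_of_real (d i) \<cdot>\<^sub>v col U i" .
  show "qf (U * dmat n d * mat_adjoint U) (col U i) = complex_of_real (d i)"
    unfolding qf_def ev using c cc by simp
qed

end

lemma udecompD: assumes "udecomp n M U d"
  shows "U \<in> carrier_mat n n" "mat_adjoint U * U = 1\<^sub>m n" "U * mat_adjoint U = 1\<^sub>m n"
    "M = U * dmat n d * mat_adjoint U"
  using assms unfolding udecomp_def by auto

lemma ud_carrier: "udecomp n M U d \<Longrightarrow> M \<in> carrier_mat n n"
  unfolding udecomp_def by auto

lemma ud_spectrum: assumes ud: "udecomp n M U d"
  and cp: "char_poly M = (\<Prod>i<n. [:- complex_of_real (d i), 1:])"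
  shows "spectrum M = (\<lambda>i. complex_of_real (d i)) ` {..<n}"
proof -
  have M: "M \<in> carrier_mat n n" using ud_carrier[OF ud] .
  show ?thesis unfolding spectrum_root_char_poly[OF M] cp poly_prod
    by (auto simp: prod_zero_iff)
qed

lemma order_prod_linear: fixes d :: "nat \<Rightarrow> real" shows
  "order r (\<Prod>i<n. [:- complex_of_real (d i), 1:]) = card {i. i < n \<and> complex_of_real (d i) = r}"
proof (induct n)
  case 0
  then show ?case by (simp add: order_0I)
next
  case (Suc n)
  let ?p = "\<Prod>i<n. [:- complex_of_real (d i), 1:]"
  have p0: "?p \<noteq> 0" by (auto simp: prod_zero_iff)
  have ol: "order r [:- complex_of_real (d n), 1:] = (if complex_of_real (d n) = r then 1 else 0)"
  proof (cases "complex_of_real (d n) = r")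
    case True
    thus ?thesis using order_power_n_n[of r 1] by auto
  next
    case False
    have "poly [:- complex_of_real (d n), 1:] r \<noteq> 0" using False by simp
    from order_0I[OF this] False show ?thesis by simp
  qed
  have "order r (\<Prod>i<Suc n. [:- complex_of_real (d i), 1:]) = order r (?p * [:- complex_of_real (d n), 1:])"
    by simp
  also have "\<dots> = order r ?p + order r [:- complex_of_real (d n), 1:]"
  proof (rule order_mult)
    have "[:- complex_of_real (d n), 1:] \<noteq> 0" by simp
    thus "?p * [:- complex_of_real (d n), 1:] \<noteq> 0" using p0 by (simp only: mult_eq_0_iff) simp
  qed
  also have "\<dots> = card {i. i < n \<and> complex_of_real (d i) = r} + (if complex_of_real (d n) = r then 1 else 0)"
    unfolding Suc ol ..
  also have "\<dots> = card {i. i < Suc n \<and> complex_of_real (d i) = r}"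
  proof (cases "complex_of_real (d n) = r")
    case True
    have "{i. i < Suc n \<and> complex_of_real (d i) = r} = insert n {i. i < n \<and> complex_of_real (d i) = r}"
      using True by auto
    thus ?thesis using True by simp
  next
    case False
    have "{i. i < Suc n \<and> complex_of_real (d i) = r} = {i. i < n \<and> complex_of_real (d i) = r}"
      using False less_Suc_eq by auto
    thus ?thesis using False by simp
  qed
  finally show ?case .
qed

lemma tn_formula: assumes ud: "udecomp n M U d"
  and cp: "char_poly M = (\<Prod>i<n. [:- complex_of_real (d i), 1:])"
  shows "(\<Sum>e\<in>spectrum M. real (order e (char_poly M)) * sqrt (Re e)) = (\<Sum>i<n. sqrt (d i))"
proof -
  let ?f = "\<lambda>i. complex_of_real (d i)"
  have "(\<Sum>i<n. sqrt (d i)) = (\<Sum>y\<in>?f ` {..<n}. \<Sum>i\<in>{x\<in>{..<n}. ?f x = y}. sqrt (d i))"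
    by (rule sum.image_gen, simp)
  also have "\<dots> = (\<Sum>y\<in>?f ` {..<n}. real (card {i. i < n \<and> ?f i = y}) * sqrt (Re y))"
  proof (rule sum.cong[OF refl])
    fix y assume "y \<in> ?f ` {..<n}"
    have "(\<Sum>i\<in>{x\<in>{..<n}. ?f x = y}. sqrt (d i)) = (\<Sum>i\<in>{x\<in>{..<n}. ?f x = y}. sqrt (Re y))"
      by (rule sum.cong, auto)
    also have "\<dots> = real (card {i. i < n \<and> ?f i = y}) * sqrt (Re y)" by simp
    finally show "(\<Sum>i\<in>{x\<in>{..<n}. ?f x = y}. sqrt (d i)) = real (card {i. i < n \<and> ?f i = y}) * sqrt (Re y)" .
  qed
  finally show ?thesis unfolding ud_spectrum[OF ud cp] cp order_prod_linear by simp
qed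


lemma row_adj': fixes A :: "complex mat" shows "i < dim_col A \<Longrightarrow> row (mat_adjoint A) i = conjugate (col A i)"
  by (rule eq_vecI, auto)

lemma mat_trace_mult_comm: assumes A: "A \<in> carrier_mat n m" and B: "B \<in> carrier_mat m n"
  shows "mat_trace (A * B) = mat_trace (B * A)"
proof -
  have "mat_trace (A * B) = (\<Sum>i<n. \<Sum>k<m. A $$ (i,k) * B $$ (k,i))"
    unfolding mat_trace_def using A B by (simp add: scalar_prod_def lessThan_atLeast0)
  also have "\<dots> = (\<Sum>k<m. \<Sum>i<n. B $$ (k,i) * A $$ (i,k))"
    by (subst sum.swap, simp add: mult.commute)
  also have "\<dots> = mat_trace (B * A)"
    unfolding mat_trace_def using A B by (simp add: scalar_prod_def lessThan_atLeast0)
  finally show ?thesis .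
qed

lemma mat_trace_add: assumes "A \<in> carrier_mat n n" "B \<in> carrier_mat n n"
  shows "mat_trace (A + B) = mat_trace A + mat_trace B"
  unfolding mat_trace_def using assms by (simp add: sum.distrib)

lemma mat_trace_minus: assumes "A \<in> carrier_mat n n" "B \<in> carrier_mat n n"
  shows "mat_trace (A - B) = mat_trace A - mat_trace B"
  unfolding mat_trace_def using assms by (simp add: sum_subtractf)

lemma mat_trace_smult: assumes "A \<in> carrier_mat n n" shows "mat_trace (c \<cdot>\<^sub>m A) = c * mat_trace A"
  unfolding mat_trace_def using assms by (simp add: sum_distrib_left)

lemma mat_trace_one: "mat_trace (1\<^sub>m n) = of_nat n"
  unfolding mat_trace_def by simp

lemma mat_trace_dmat: "mat_trace (dmat n d) = complex_of_real (\<Sum>i<n. d i)"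
  unfolding mat_trace_def by simp

lemma mat_trace_adj: assumes "A \<in> carrier_mat n n" shows "mat_trace (mat_adjoint A) = cnj (mat_trace A)"
  unfolding mat_trace_def using assms by (simp add: cnj_sum)

lemma mat_trace_qf: assumes R: "R \<in> carrier_mat n n" and G: "G \<in> carrier_mat n n"
  shows "mat_trace (mat_adjoint R * G * R) = (\<Sum>j<n. qf G (col R j))"
proof -
  have "mat_adjoint R * G * R = mat_adjoint R * (G * R)"
    using R G by (simp add: assoc_mult_mat[of _ n n _ n _ n])
  hence "mat_trace (mat_adjoint R * G * R) = (\<Sum>j<n. (mat_adjoint R * (G * R)) $$ (j,j))"
    unfolding mat_trace_def using R by simp
  also have "\<dots> = (\<Sum>j<n. qf G (col R j))"
  proof (rule sum.cong[OF refl])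
    fix j assume "j \<in> {..<n}"
    hence j: "j < n" by auto
    have "(mat_adjoint R * (G * R)) $$ (j,j) = row (mat_adjoint R) j \<bullet> col (G * R) j"
      using R G j by simp
    also have "row (mat_adjoint R) j = conjugate (col R j)" using R j by (simp add: row_adj')
    also have "col (G * R) j = G *\<^sub>v col R j" by (rule col_mult2[OF G R j])
    finally show "(mat_adjoint R * (G * R)) $$ (j,j) = qf G (col R j)" unfolding qf_def .
  qed
  finally show ?thesis .
qed

lemma mat_trace_psd: assumes R: "R \<in> carrier_mat n n" and G: "G \<in> carrier_mat n n"
  and psd: "\<And>v. v \<in> carrier_vec n \<Longrightarrow> Re (qf G v) \<ge> 0"
  shows "Re (mat_trace (mat_adjoint R * G * R)) \<ge> 0"
  unfolding mat_trace_qf[OF R G] Re_sum using R by (auto intro!: sum_nonneg psd)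

lemma mat_trace_frob: assumes R: "R \<in> carrier_mat n n"
  shows "Re (mat_trace (mat_adjoint R * R)) \<ge> 0"
  using mat_trace_psd[OF R one_carrier_mat] R qf_one[of _ n] conj_self_real(2) by simp


lemma inv_assoc: assumes "P \<in> carrier_mat n n" "Q \<in> carrier_mat n n" "P * Q = 1\<^sub>m n" "X \<in> carrier_mat n k"
  shows "P * (Q * X) = (X :: complex mat)"
proof -
  have "(P * Q) * X = P * (Q * X)" by (rule assoc_mult_mat, insert assms, auto)
  thus ?thesis using assms by simp
qed

lemma mat_vec_zero: "M \<in> carrier_mat n m \<Longrightarrow> M *\<^sub>v 0\<^sub>v m = (0\<^sub>v n :: complex vec)"
  by (rule eq_vecI, auto)

lemma smult_zero_vec'[simp]: "c \<cdot>\<^sub>v 0\<^sub>v n = (0\<^sub>v n :: complex vec)"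
  by (rule eq_vecI, auto)

lemma qf_zero: "M \<in> carrier_mat n n \<Longrightarrow> qf M (0\<^sub>v n) = 0" unfolding qf_def by simp

lemma udecomp_unitary: assumes "udecomp n M U d"
  shows "U \<in> carrier_mat n n" "mat_adjoint U * U = 1\<^sub>m n" "U * mat_adjoint U = 1\<^sub>m n"
  using assms unfolding udecomp_def by auto

lemma car3: "A \<in> carrier_mat n n \<Longrightarrow> B \<in> carrier_mat n n \<Longrightarrow> C \<in> carrier_mat n n \<Longrightarrow> A * B * C \<in> carrier_mat n n"
  by (metis mult_carrier_mat)

lemma amgm_c: fixes x y :: complex and t :: real assumes t: "t > 0"
  shows "2 * Re (cnj x * y) \<le> t * (cmod x)^2 + (cmod y)^2 / t"
proof -
  have "0 \<le> ((t * Re x - Re y)^2 + (t * Im x - Im y)^2) / t" using t by simp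
  also have "\<dots> = t * (cmod x)^2 + (cmod y)^2 / t - 2 * Re (cnj x * y)"
    unfolding cmod_power2 using t by (simp add: field_simps power2_eq_square)
  finally show ?thesis by simp
qed

lemma re_cnj_sq: "Re (cnj z * z) = (cmod z)^2"
proof -
  have "cnj z * z = complex_of_real ((cmod z)^2)" using complex_norm_square[of z] by (simp add: mult.commute)
  thus ?thesis by simp
qed

lemma trace_entries: fixes P Q :: "complex mat"
  assumes P: "P \<in> carrier_mat n n" and Q: "Q \<in> carrier_mat n n"
  shows "mat_trace (mat_adjoint P * Q) = (\<Sum>j<n. \<Sum>i<n. cnj (P $$ (i,j)) * Q $$ (i,j))"
  unfolding mat_trace_def using P Q by (simp add: scalar_prod_def lessThan_atLeast0)

lemma trace_amgm: fixes P Q :: "complex mat"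
  assumes P: "P \<in> carrier_mat n n" and Q: "Q \<in> carrier_mat n n" and t: "t > 0"
  shows "2 * Re (mat_trace (mat_adjoint P * Q)) \<le> t * Re (mat_trace (mat_adjoint P * P)) + Re (mat_trace (mat_adjoint Q * Q)) / t"
proof -
  have "2 * Re (mat_trace (mat_adjoint P * Q)) = (\<Sum>j<n. \<Sum>i<n. 2 * Re (cnj (P $$ (i,j)) * Q $$ (i,j)))"
    unfolding trace_entries[OF P Q] by (simp add: Re_sum sum_distrib_left)
  also have "\<dots> \<le> (\<Sum>j<n. \<Sum>i<n. t * (cmod (P $$ (i,j)))^2 + (cmod (Q $$ (i,j)))^2 / t)"
    by (intro sum_mono amgm_c[OF t])
  also have "\<dots> = t * (\<Sum>j<n. \<Sum>i<n. (cmod (P $$ (i,j)))^2) + (\<Sum>j<n. \<Sum>i<n. (cmod (Q $$ (i,j)))^2) / t"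
    by (simp add: sum.distrib sum_distrib_left sum_divide_distrib)
  also have "(\<Sum>j<n. \<Sum>i<n. (cmod (P $$ (i,j)))^2) = Re (mat_trace (mat_adjoint P * P))"
    unfolding trace_entries[OF P P] Re_sum re_cnj_sq ..
  also have "(\<Sum>j<n. \<Sum>i<n. (cmod (Q $$ (i,j)))^2) = Re (mat_trace (mat_adjoint Q * Q))"
    unfolding trace_entries[OF Q Q] Re_sum re_cnj_sq ..
  finally show ?thesis .
qed

context
  fixes n :: nat and A Z :: "complex mat" and a b :: real
  assumes n: "n > 0"
    and A: "A \<in> carrier_mat n n" and Z: "Z \<in> carrier_mat n n"
    and psdA: "psd_mat n A" and pdZ: "pd_mat n Z"
    and a_def: "a = Max (Re ` spectrum Z)" and b_def: "b = Min (Re ` spectrum Z)"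
begin

lemma A_herm: "mat_adjoint A = A" using psdA unfolding psd_mat_def hermitian_mat_def by auto
lemma Z_herm: "mat_adjoint Z = Z" using pdZ unfolding pd_mat_def hermitian_mat_def by auto

lemma A_psd: "v \<in> carrier_vec n \<Longrightarrow> Re (qf A v) \<ge> 0"
  using psdA unfolding psd_mat_def qf_def by auto

lemma Z_pd: "v \<in> carrier_vec n \<Longrightarrow> v \<noteq> 0\<^sub>v n \<Longrightarrow> Re (qf Z v) > 0"
  using pdZ unfolding pd_mat_def qf_def by auto

lemma Z_psd: assumes v: "v \<in> carrier_vec n" shows "Re (qf Z v) \<ge> 0"
proof (cases "v = 0\<^sub>v n")
  case True thus ?thesis using Z by (simp add: qf_zero)
next
  case False thus ?thesis using Z_pd[OF v] by auto
qed

lemma Z_facts: "a > 0" "b > 0"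
  "\<And>w. w \<in> carrier_vec n \<Longrightarrow> Re (qf (Z * Z) w) \<le> (a + b) * Re (qf Z w) - a * b * nsq w"
proof -
  from hermitian_decomp[of n Z] pdZ obtain U z where ud: "udecomp n Z U z"
    and cp: "char_poly Z = (\<Prod>i<n. [:- complex_of_real (z i), 1:])"
    unfolding pd_mat_def by auto
  note UU = udecomp_unitary[OF ud]
  have Zeq: "Z = U * dmat n z * mat_adjoint U" using ud unfolding udecomp_def by auto
  have spec: "Re ` spectrum Z = z ` {..<n}"
    unfolding ud_spectrum[OF ud cp] image_image by simp
  have zpos: "z i > 0" if i: "i < n" for i
  proof -
    note c = ud_col[OF UU i]
    have "Re (qf Z (col U i)) > 0" by (rule Z_pd, insert c, auto)
    thus ?thesis using c(5)[of z] Zeq by simp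
  qed
  have fin: "finite (z ` {..<n})" and ne: "z ` {..<n} \<noteq> {}" using n by auto
  have ai: "z i \<le> a" if "i < n" for i unfolding a_def spec using fin that by auto
  have bi: "b \<le> z i" if "i < n" for i unfolding b_def spec using fin that by auto
  have "b \<in> z ` {..<n}" unfolding b_def spec using Min_in[OF fin ne] .
  then obtain j where j: "j < n" "b = z j" by auto
  show bpos: "b > 0" using zpos[OF j(1)] j by simp
  show apos: "a > 0" using bi[OF j(1)] ai[OF j(1)] bpos by simp
  fix w :: "complex vec" assume w: "w \<in> carrier_vec n"
  define g where "g i = (a + b) * z i - z i * z i - a * b" for i
  have g: "g i \<ge> 0" if "i < n" for i
  proof -
    have "g i = (a - z i) * (z i - b)" unfolding g_def by (simp add: algebra_simps)
    thus ?thesis using ai[OF that] bi[OF that] by simp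
  qed
  have Geq: "complex_of_real (a + b) \<cdot>\<^sub>m Z - Z * Z - complex_of_real (a * b) \<cdot>\<^sub>m 1\<^sub>m n = U * dmat n g * mat_adjoint U"
    unfolding Zeq ud_mult_eq[OF UU] ud_smult_eq[OF UU] ud_one_eq[OF UU] ud_minus_eq[OF UU]
    by (simp add: g_def[abs_def])
  have "Re (qf (complex_of_real (a + b) \<cdot>\<^sub>m Z - Z * Z - complex_of_real (a * b) \<cdot>\<^sub>m 1\<^sub>m n) w) \<ge> 0"
    unfolding Geq by (rule ud_qf_nonneg[OF UU w g])
  moreover have "qf (complex_of_real (a + b) \<cdot>\<^sub>m Z - Z * Z - complex_of_real (a * b) \<cdot>\<^sub>m 1\<^sub>m n) w
    = complex_of_real (a + b) * qf Z w - qf (Z * Z) w - complex_of_real (a * b) * complex_of_real (nsq w)"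
  proof -
    let ?X1 = "complex_of_real (a + b) \<cdot>\<^sub>m Z" and ?X2 = "Z * Z" and ?X3 = "complex_of_real (a * b) \<cdot>\<^sub>m 1\<^sub>m n"
    have c: "?X1 \<in> carrier_mat n n" "?X2 \<in> carrier_mat n n" "?X3 \<in> carrier_mat n n" using Z by auto
    have c12: "?X1 - ?X2 \<in> carrier_mat n n" using c by (auto intro: minus_carrier_mat)
    have "qf (?X1 - ?X2 - ?X3) w = qf ?X1 w - qf ?X2 w - qf ?X3 w"
      using qf_minus[OF c12 c(3) w] qf_minus[OF c(1,2) w] by simp
    also have "qf ?X1 w = complex_of_real (a + b) * qf Z w" using qf_smult[OF Z w] .
    also have "qf ?X3 w = complex_of_real (a * b) * complex_of_real (nsq w)"
      using qf_smult[OF one_carrier_mat w] qf_one[OF w] by simp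
    finally show ?thesis .
  qed
  ultimately show "Re (qf (Z * Z) w) \<le> (a + b) * Re (qf Z w) - a * b * nsq w" by simp
qed

lemma A_sqrt: "\<exists>UA \<alpha> W. udecomp n A UA \<alpha> \<and> (\<forall>i<n. \<alpha> i \<ge> 0) \<and> W \<in> carrier_mat n n \<and> mat_adjoint W = W \<and> W * W = A"
proof -
  from hermitian_decomp[of n A] psdA obtain U d where ud: "udecomp n A U d"
    unfolding psd_mat_def by auto
  note UU = udecomp_unitary[OF ud]
  have Aeq: "A = U * dmat n d * mat_adjoint U" using ud unfolding udecomp_def by auto
  have dnn: "d i \<ge> 0" if i: "i < n" for i
  proof -
    note c = ud_col[OF UU i]
    have "Re (qf A (col U i)) \<ge> 0" by (rule A_psd, insert c, auto)
    thus ?thesis using c(5)[of d] Aeq by simp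
  qed
  define W where "W = U * dmat n (\<lambda>i. sqrt (d i)) * mat_adjoint U"
  have "W * W = U * dmat n (\<lambda>i. sqrt (d i) * sqrt (d i)) * mat_adjoint U"
    unfolding W_def ud_mult_eq[OF UU] ..
  also have "dmat n (\<lambda>i. sqrt (d i) * sqrt (d i)) = dmat n d"
    by (rule eq_matI, insert dnn, auto)
  finally have "W * W = A" unfolding Aeq .
  moreover have "mat_adjoint W = W" unfolding W_def ud_adj_eq[OF UU] ..
  moreover have "W \<in> carrier_mat n n" unfolding W_def
    by (rule mult_carrier_mat[of _ n n], rule mult_carrier_mat[of _ n n], insert UU, auto)
  ultimately show ?thesis using ud dnn by blast
qed


lemma op_part: "op_norm (A * Z) \<le> (a + b) / (2 * sqrt (a * b)) * spectral_radius (A * Z)"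
proof -
  obtain UA \<alpha> W where udA: "udecomp n A UA \<alpha>" and \<alpha>nn: "\<forall>i<n. \<alpha> i \<ge> 0"
    and W: "W \<in> carrier_mat n n" and Wh: "mat_adjoint W = W" and WW: "W * W = A"
    using A_sqrt by blast
  note UUA = udecomp_unitary[OF udA]
  have Aeq: "A = UA * dmat n \<alpha> * mat_adjoint UA" using udA unfolding udecomp_def by auto
  have ab: "a > 0" "b > 0" using Z_facts by auto
  define X where "X = A * Z"
  have X: "X \<in> carrier_mat n n" unfolding X_def using A Z by simp
  define \<rho> where "\<rho> = spectral_radius X"
  have \<rho>0: "\<rho> \<ge> 0" using spectral_radius_mem_max(1)[OF X n] unfolding \<rho>_def by auto
  define C where "C = W * Z * W"
  have C: "C \<in> carrier_mat n n" unfolding C_def using W Z by simp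
  have Cqf: "qf C x = qf Z (W *\<^sub>v x)" if x: "x \<in> carrier_vec n" for x
    using qf_conj[OF W Z x] unfolding Wh C_def .
  have hC: "hermitian_mat n C"
  proof -
    have "mat_adjoint C = mat_adjoint W * mat_adjoint (W * Z)"
      unfolding C_def by (rule adj_mult[of _ n n _ n], insert W Z, auto)
    also have "\<dots> = W * (Z * W)" using adj_mult[OF W Z] Wh Z_herm by simp
    also have "\<dots> = C" unfolding C_def using W Z by (simp add: assoc_mult_mat[of _ n n _ n _ n])
    finally show ?thesis unfolding hermitian_mat_def using C by simp
  qed
  from hermitian_decomp[OF hC] obtain UC \<gamma> where udC: "udecomp n C UC \<gamma>" by auto
  note UUC = udecomp_unitary[OF udC]
  have Ceq: "C = UC * dmat n \<gamma> * mat_adjoint UC" using udC unfolding udecomp_def by auto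
  have fin: "finite (\<gamma> ` {..<n})" and ne: "\<gamma> ` {..<n} \<noteq> {}" using n by auto
  from Max_in[OF fin ne] obtain k where k: "k < n" and \<gamma>k: "\<gamma> k = Max (\<gamma> ` {..<n})" by auto
  define lam where "lam = \<gamma> k"
  have \<gamma>le: "\<gamma> i \<le> lam" if "i < n" for i unfolding lam_def \<gamma>k using fin that by auto
  have qfC: "Re (qf C x) \<le> lam * nsq x" if x: "x \<in> carrier_vec n" for x
  proof -
    have eq: "complex_of_real lam \<cdot>\<^sub>m 1\<^sub>m n - C = UC * dmat n (\<lambda>i. lam * 1 - \<gamma> i) * mat_adjoint UC"
      unfolding Ceq ud_one_eq[OF UUC] ud_smult_eq[OF UUC] ud_minus_eq[OF UUC] ..
    have "Re (qf (complex_of_real lam \<cdot>\<^sub>m 1\<^sub>m n - C) x) \<ge> 0"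
      unfolding eq by (rule ud_qf_nonneg[OF UUC x], insert \<gamma>le, auto)
    moreover have "qf (complex_of_real lam \<cdot>\<^sub>m 1\<^sub>m n - C) x = complex_of_real lam * complex_of_real (nsq x) - qf C x"
      using qf_minus[OF _ C x, of "complex_of_real lam \<cdot>\<^sub>m 1\<^sub>m n"] qf_smult[OF one_carrier_mat x] qf_one[OF x] by simp
    ultimately show ?thesis by simp
  qed
  note uk = ud_col[OF UUC k]
  have l0: "lam \<ge> 0"
  proof -
    have "qf C (col UC k) = complex_of_real lam" using uk(5)[of \<gamma>] unfolding Ceq[symmetric] lam_def .
    moreover have "Re (qf C (col UC k)) \<ge> 0" unfolding Cqf[OF uk(2)] by (rule Z_psd, insert W uk(2), simp)
    ultimately show ?thesis by simp
  qed
  have lr: "lam \<le> \<rho>"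
  proof (cases "lam = 0")
    case True thus ?thesis using \<rho>0 by simp
  next
    case False
    define u where "u = col UC k"
    have u: "u \<in> carrier_vec n" "u \<noteq> 0\<^sub>v n" and Cu: "C *\<^sub>v u = complex_of_real lam \<cdot>\<^sub>v u"
      using uk(2,4) uk(1)[of \<gamma>] unfolding u_def Ceq[symmetric] lam_def by auto
    define x where "x = W *\<^sub>v u"
    have x: "x \<in> carrier_vec n" unfolding x_def using W u by simp
    have "A * Z * W = W * C" unfolding C_def WW[symmetric] using W Z
      by (simp add: assoc_mult_mat[of _ n n _ n _ n])
    hence "X *\<^sub>v x = W *\<^sub>v (C *\<^sub>v u)" unfolding x_def X_def
      using A Z W C u by (metis assoc_mult_mat_vec mult_carrier_mat)
    also have "\<dots> = complex_of_real lam \<cdot>\<^sub>v x" unfolding Cu x_def using W u by (simp add: mult_mat_vec)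
    finally have Xx: "X *\<^sub>v x = complex_of_real lam \<cdot>\<^sub>v x" .
    have x0: "x \<noteq> 0\<^sub>v n"
    proof
      assume "x = 0\<^sub>v n"
      moreover have "C *\<^sub>v u = (W * Z) *\<^sub>v x" unfolding C_def x_def using W Z u
        by (simp add: assoc_mult_mat_vec[of _ n n _ n])
      ultimately have "C *\<^sub>v u = 0\<^sub>v n" using mat_vec_zero[of "W * Z" n n] W Z by simp
      hence "complex_of_real lam \<cdot>\<^sub>v u = 0\<^sub>v n" using Cu by simp
      hence "(1 / complex_of_real lam) \<cdot>\<^sub>v (complex_of_real lam \<cdot>\<^sub>v u) = 0\<^sub>v n" by simp
      hence "u = 0\<^sub>v n" using False by (simp add: smult_smult_assoc)
      thus False using u by simp
    qed
    have "eigenvector X x (complex_of_real lam)" unfolding eigenvector_def using X x x0 Xx by auto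
    hence "complex_of_real lam \<in> spectrum X" unfolding spectrum_def eigenvalue_def by auto
    hence "norm (complex_of_real lam) \<in> norm ` spectrum X" by blast
    from spectral_radius_mem_max(2)[OF X n this] have "norm (complex_of_real lam) \<le> \<rho>" unfolding \<rho>_def .
    thus ?thesis by simp
  qed
  define \<kappa> where "\<kappa> = (a + b)^2 / (4 * a * b) * \<rho>^2"
  have adjX: "mat_adjoint X = Z * A" unfolding X_def using adj_mult[OF A Z] A_herm Z_herm by simp
  have main: "Re (qf (X * mat_adjoint X) y) \<le> \<kappa> * nsq y" if y: "y \<in> carrier_vec n" for y
  proof -
    define w where "w = A *\<^sub>v y"
    have w: "w \<in> carrier_vec n" unfolding w_def using A y by simp
    have "qf (X * mat_adjoint X) y = complex_of_real (nsq (mat_adjoint X *\<^sub>v y))"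
      using qf_adj_mult[of "mat_adjoint X" n y] X y by simp
    also have "mat_adjoint X *\<^sub>v y = Z *\<^sub>v w" unfolding adjX w_def using Z A y by simp
    finally have e1: "Re (qf (X * mat_adjoint X) y) = nsq (Z *\<^sub>v w)" by simp
    have e2: "nsq (Z *\<^sub>v w) = Re (qf (Z * Z) w)" using qf_adj_mult[OF Z w] Z_herm by simp
    have e3: "Re (qf (Z * Z) w) \<le> (a + b) * Re (qf Z w) - a * b * nsq w" using Z_facts(3)[OF w] .
    have wW: "w = W *\<^sub>v (W *\<^sub>v y)" unfolding w_def WW[symmetric] using W y by simp
    have e4: "Re (qf Z w) \<le> lam * Re (qf A y)"
    proof -
      have "Re (qf Z w) = Re (qf C (W *\<^sub>v y))" unfolding wW Cqf[OF mult_mat_vec_carrier[OF W y]] ..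
      also have "\<dots> \<le> lam * nsq (W *\<^sub>v y)" using qfC W y by simp
      also have "nsq (W *\<^sub>v y) = Re (qf A y)" using qf_adj_mult[OF W y] Wh WW by simp
      finally show ?thesis .
    qed
    have e5: "nsq w = Re (qf (A * A) y)" using qf_adj_mult[OF A y] A_herm unfolding w_def by simp
    define p where "p i = \<kappa> * 1 - (a + b) * lam * \<alpha> i + a * b * (\<alpha> i * \<alpha> i)" for i
    have pnn: "p i \<ge> 0" if "i < n" for i
      using kant_real[OF ab l0 lr, of "\<alpha> i"] \<alpha>nn that unfolding p_def \<kappa>_def
      by (simp add: power2_eq_square mult.assoc)
    define PM where "PM = complex_of_real \<kappa> \<cdot>\<^sub>m 1\<^sub>m n - complex_of_real ((a + b) * lam) \<cdot>\<^sub>m A + complex_of_real (a * b) \<cdot>\<^sub>m (A * A)"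
    have PMeq: "PM = UA * dmat n p * mat_adjoint UA"
      unfolding PM_def Aeq ud_one_eq[OF UUA] ud_smult_eq[OF UUA] ud_mult_eq[OF UUA] ud_minus_eq[OF UUA] ud_add_eq[OF UUA]
      by (simp add: p_def[abs_def])
    have "Re (qf PM y) \<ge> 0" unfolding PMeq by (rule ud_qf_nonneg[OF UUA y pnn])
    moreover have "qf PM y = complex_of_real \<kappa> * complex_of_real (nsq y) - complex_of_real ((a + b) * lam) * qf A y + complex_of_real (a * b) * qf (A * A) y"
    proof -
      let ?P1 = "complex_of_real \<kappa> \<cdot>\<^sub>m 1\<^sub>m n" and ?P2 = "complex_of_real ((a + b) * lam) \<cdot>\<^sub>m A"
        and ?P3 = "complex_of_real (a * b) \<cdot>\<^sub>m (A * A)"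
      have c: "?P1 \<in> carrier_mat n n" "?P2 \<in> carrier_mat n n" "?P3 \<in> carrier_mat n n" using A by auto
      have c12: "?P1 - ?P2 \<in> carrier_mat n n" using c by (auto intro: minus_carrier_mat)
      have "qf PM y = qf ?P1 y - qf ?P2 y + qf ?P3 y"
        unfolding PM_def using qf_add[OF c12 c(3) y] qf_minus[OF c(1,2) y] by simp
      also have "qf ?P1 y = complex_of_real \<kappa> * complex_of_real (nsq y)"
        using qf_smult[OF one_carrier_mat y] qf_one[OF y] by simp
      also have "qf ?P2 y = complex_of_real ((a + b) * lam) * qf A y" using qf_smult[OF A y] .
      also have "qf ?P3 y = complex_of_real (a * b) * qf (A * A) y" using qf_smult[of "A * A" n y] A y by simp
      finally show ?thesis .
    qed
    ultimately have e6: "\<kappa> * nsq y - (a + b) * lam * Re (qf A y) + a * b * Re (qf (A * A) y) \<ge> 0" by simp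
    have "(a + b) * Re (qf Z w) \<le> (a + b) * (lam * Re (qf A y))" using e4 ab by simp
    thus ?thesis using e1 e2 e3 e5 e6 by (simp add: algebra_simps)
  qed
  have specb: "Re e \<le> \<kappa>" if e: "e \<in> spectrum (mat_adjoint X * X)" for e
  proof -
    have MX: "mat_adjoint X * X \<in> carrier_mat n n" using mult_carrier_mat[OF adj_carrier[OF X] X] .
    from e obtain x where ev: "eigenvector (mat_adjoint X * X) x e" unfolding spectrum_def eigenvalue_def by auto
    hence x: "x \<in> carrier_vec n" "x \<noteq> 0\<^sub>v n" and Mx: "(mat_adjoint X * X) *\<^sub>v x = e \<cdot>\<^sub>v x"
      unfolding eigenvector_def using X by auto
    define y where "y = X *\<^sub>v x"
    have y: "y \<in> carrier_vec n" unfolding y_def using X x by simp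
    have nx: "nsq x > 0" using nsq_pos[OF x] .
    have "qf (mat_adjoint X * X) x = e * complex_of_real (nsq x)"
      unfolding qf_def Mx using x conj_self_real(1)[of x] by simp
    moreover have "qf (mat_adjoint X * X) x = complex_of_real (nsq y)" unfolding y_def using qf_adj_mult[OF X x(1)] .
    ultimately have exy: "e * complex_of_real (nsq x) = complex_of_real (nsq y)" by simp
    have "(X * mat_adjoint X) *\<^sub>v y = X *\<^sub>v ((mat_adjoint X * X) *\<^sub>v x)"
      unfolding y_def using X x by (simp add: assoc_mult_mat_vec[of _ n n _ n])
    also have "\<dots> = e \<cdot>\<^sub>v y" unfolding Mx y_def using X x by (simp add: mult_mat_vec)
    finally have XXy: "(X * mat_adjoint X) *\<^sub>v y = e \<cdot>\<^sub>v y" .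
    have qy: "qf (X * mat_adjoint X) y = e * complex_of_real (nsq y)"
      unfolding qf_def XXy using y conj_self_real(1)[of y] by simp
    show ?thesis
    proof (cases "nsq y = 0")
      case True
      hence "e = 0" using exy nx by simp
      moreover have "\<kappa> \<ge> 0" unfolding \<kappa>_def using ab by simp
      ultimately show ?thesis by simp
    next
      case False
      hence ny: "nsq y > 0" using conj_self_real(2)[of y] by simp
      have "Re e * nsq y \<le> \<kappa> * nsq y" using main[OF y] unfolding qy by simp
      thus ?thesis using ny by simp
    qed
  qed
  have MX: "mat_adjoint X * X \<in> carrier_mat n n" using mult_carrier_mat[OF adj_carrier[OF X] X] .
  have finS: "finite (Re ` spectrum (mat_adjoint X * X))" using card_finite_spectrum(1)[OF MX] by simp
  have neS: "Re ` spectrum (mat_adjoint X * X) \<noteq> {}" using spectrum_non_empty[OF MX n] by simp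
  have "Max (Re ` spectrum (mat_adjoint X * X)) \<le> \<kappa>" using specb finS neS by (simp add: Max_le_iff)
  hence "op_norm X \<le> sqrt \<kappa>" unfolding op_norm_def by simp
  also have "sqrt \<kappa> = (a + b) / (2 * sqrt (a * b)) * \<rho>" unfolding \<kappa>_def by (rule kant_sqrt[OF ab \<rho>0])
  finally show ?thesis unfolding X_def \<rho>_def .
qed


lemma tr_part: "trace_norm (A * Z) \<le> (a + b) / (2 * sqrt (a * b)) * Re (mat_trace (A * Z))"
proof -
  obtain UA \<alpha> W where W: "W \<in> carrier_mat n n" and Wh: "mat_adjoint W = W" and WW: "W * W = A"
    using A_sqrt by blast
  have ab: "a > 0" "b > 0" using Z_facts by auto
  define X where "X = A * Z"
  have X: "X \<in> carrier_mat n n" unfolding X_def using A Z by simp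
  have Xa: "mat_adjoint X \<in> carrier_mat n n" using X by simp
  define M where "M = mat_adjoint X * X"
  have M: "M \<in> carrier_mat n n" unfolding M_def using mult_carrier_mat[OF Xa X] .
  have hM: "hermitian_mat n M" unfolding hermitian_mat_def M_def
    using M adj_mult[OF Xa X] unfolding M_def by simp
  from hermitian_decomp[OF hM] obtain V m where udM: "udecomp n M V m"
    and cp: "char_poly M = (\<Prod>i<n. [:- complex_of_real (m i), 1:])" by auto
  note UUV = udecomp_unitary[OF udM]
  have V: "V \<in> carrier_mat n n" and Va: "mat_adjoint V \<in> carrier_mat n n" using UUV by auto
  have Meq: "M = V * dmat n m * mat_adjoint V" using udM unfolding udecomp_def by auto
  have tn: "trace_norm X = (\<Sum>i<n. sqrt (m i))"
    unfolding trace_norm_def M_def[symmetric] using tn_formula[OF udM cp] .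
  have mnn: "m i \<ge> 0" if i: "i < n" for i
  proof -
    note c = ud_col[OF UUV i]
    have "qf M (col V i) = complex_of_real (nsq (X *\<^sub>v col V i))" unfolding M_def
      by (rule qf_adj_mult[OF X c(2)])
    hence "m i = nsq (X *\<^sub>v col V i)" using c(5)[of m] unfolding Meq[symmetric] by simp
    thus ?thesis using conj_self_real(2) by simp
  qed
  define s where "s i = sqrt (m i)" for i
  define sp where "sp i = (if m i = 0 then 0 else 1 / sqrt (m i))" for i
  define E where "E i = sp i * m i * sp i" for i
  define U' where "U' = X * V * dmat n sp"
  have U': "U' \<in> carrier_mat n n" unfolding U'_def using car3[OF X V dmat_carrier] .
  have U'a: "mat_adjoint U' \<in> carrier_mat n n" using U' by simp
  have adjU': "mat_adjoint U' = dmat n sp * mat_adjoint V * mat_adjoint X"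
  proof -
    have "mat_adjoint U' = dmat n sp * mat_adjoint (X * V)" unfolding U'_def
      by (subst adj_mult[of _ n n _ n], insert X V, auto simp: dmat_adj)
    also have "mat_adjoint (X * V) = mat_adjoint V * mat_adjoint X" by (rule adj_mult[OF X V])
    finally show ?thesis using V X by (simp add: assoc_mult_mat[of _ n n _ n _ n] mult_carrier_mat[of _ n n])
  qed
  have VMV: "mat_adjoint V * M * V = dmat n m"
  proof -
    have "mat_adjoint V * M * V = mat_adjoint V * (V * (dmat n m * (mat_adjoint V * V)))"
      unfolding Meq using V Va by (simp add: assoc_mult_mat[of _ n n _ n _ n] mult_carrier_mat[of _ n n])
    also have "\<dots> = mat_adjoint V * (V * dmat n m)" unfolding UUV(2) by simp
    also have "\<dots> = dmat n m" by (rule inv_assoc[OF Va V UUV(2) dmat_carrier])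
    finally show ?thesis .
  qed
  have T1: "mat_adjoint U' * X * V = dmat n s"
  proof -
    have "mat_adjoint U' * X * V = dmat n sp * (mat_adjoint V * M * V)"
      unfolding adjU' M_def using V Va X Xa by (simp add: assoc_mult_mat[of _ n n _ n _ n] mult_carrier_mat[of _ n n])
    also have "\<dots> = dmat n (\<lambda>i. sp i * m i)" unfolding VMV dmat_mult ..
    also have "\<dots> = dmat n s"
    proof (rule eq_matI)
      fix i j assume "i < dim_row (dmat n s)" "j < dim_col (dmat n s)"
      hence i: "i < n" and j: "j < n" by auto
      have "sp i * m i = s i" unfolding sp_def s_def using mnn[OF i]
        by (cases "m i = 0", simp_all add: real_div_sqrt)
      thus "dmat n (\<lambda>i. sp i * m i) $$ (i,j) = dmat n s $$ (i,j)" using i j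
        by (cases "i = j", simp_all del: of_real_mult add: of_real_mult[symmetric])
    qed auto
    finally show ?thesis .
  qed
  have T2: "mat_adjoint U' * U' = dmat n E"
  proof -
    have "mat_adjoint U' * U' = (dmat n sp * mat_adjoint V * mat_adjoint X) * U'" by (simp only: adjU')
    also have "\<dots> = dmat n sp * (mat_adjoint V * M * V) * dmat n sp"
      unfolding M_def U'_def using V Va X Xa by (simp add: assoc_mult_mat[of _ n n _ n _ n] mult_carrier_mat[of _ n n])
    finally have "mat_adjoint U' * U' = dmat n sp * (mat_adjoint V * M * V) * dmat n sp" .
    thus ?thesis unfolding VMV dmat_mult E_def by simp
  qed
  have T3: "U' * dmat n E = U'"
  proof -
    have "dmat n sp * dmat n E = dmat n sp"
    proof (rule eq_matI)
      fix i j assume "i < dim_row (dmat n sp)" "j < dim_col (dmat n sp)"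
      hence i: "i < n" and j: "j < n" by auto
      have "sp i * E i = sp i" unfolding E_def sp_def using mnn[OF i]
        by (cases "m i = 0", auto simp: field_simps)
      thus "(dmat n sp * dmat n E) $$ (i,j) = dmat n sp $$ (i,j)" unfolding dmat_mult using i j
        by (cases "i = j", simp_all del: of_real_mult add: of_real_mult[symmetric])
    qed auto
    thus ?thesis unfolding U'_def using X V by (simp add: assoc_mult_mat[of _ n n _ n _ n] mult_carrier_mat[of _ n n])
  qed
  define Pi where "Pi = U' * mat_adjoint U'"
  have Pi: "Pi \<in> carrier_mat n n" unfolding Pi_def using U' by simp
  have PiPi: "Pi * Pi = Pi"
  proof -
    have "Pi * Pi = U' * (mat_adjoint U' * U') * mat_adjoint U'"
      unfolding Pi_def using U' U'a by (simp add: assoc_mult_mat[of _ n n _ n _ n] mult_carrier_mat[of _ n n])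
    also have "\<dots> = Pi" unfolding T2 T3 Pi_def ..
    finally show ?thesis .
  qed
  have adjPi: "mat_adjoint Pi = Pi" unfolding Pi_def using adj_mult[OF U' U'a] by simp
  define Q where "Q = 1\<^sub>m n - Pi"
  have Q: "Q \<in> carrier_mat n n" unfolding Q_def using Pi by (auto intro: minus_carrier_mat)
  have adjQ: "mat_adjoint Q = Q" unfolding Q_def using adj_minus[OF one_carrier_mat Pi] adjPi by simp
  have QQ: "Q * Q = Q"
  proof -
    have "Q * Q = 1\<^sub>m n * Q - Pi * Q" unfolding Q_def[of] 
      by (rule minus_mult_distrib_mat[OF one_carrier_mat Pi], insert Q Q_def, auto)
    also have "Pi * Q = Pi * 1\<^sub>m n - Pi * Pi" unfolding Q_def
      by (rule mult_minus_distrib_mat[OF Pi one_carrier_mat Pi])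
    also have "\<dots> = 0\<^sub>m n n" unfolding PiPi using Pi by simp
    finally show ?thesis using Q by (intro eq_matI, auto)
  qed
  have Qpsd: "Re (qf Q v) \<ge> 0" if v: "v \<in> carrier_vec n" for v
    using qf_adj_mult[OF Q v] adjQ QQ conj_self_real(2) by simp
  have P_le: "Re (mat_trace (mat_adjoint U' * A * U')) \<le> Re (mat_trace A)"
  proof -
    have "mat_trace (mat_adjoint U' * A * U') = mat_trace (mat_adjoint U' * (A * U'))"
      using U' U'a A by (simp add: assoc_mult_mat[of _ n n _ n _ n] mult_carrier_mat[of _ n n])
    also have "\<dots> = mat_trace ((A * U') * mat_adjoint U')"
      by (rule mat_trace_mult_comm[of _ n n], insert U' U'a A, auto)
    also have "\<dots> = mat_trace (A * Pi)" unfolding Pi_def using U' U'a A by (simp add: assoc_mult_mat[of _ n n _ n _ n] mult_carrier_mat[of _ n n])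
    finally have e1: "mat_trace (mat_adjoint U' * A * U') = mat_trace (A * Pi)" .
    have "A * Q = A * 1\<^sub>m n - A * Pi" unfolding Q_def by (rule mult_minus_distrib_mat[OF A one_carrier_mat Pi])
    hence "mat_trace (A * Q) = mat_trace A - mat_trace (A * Pi)"
      using mat_trace_minus[of "A * 1\<^sub>m n" n "A * Pi"] A Pi by simp
    moreover have "mat_trace (A * Q) = mat_trace (mat_adjoint W * Q * W)"
    proof -
      have "mat_trace (A * Q) = mat_trace (W * (W * Q))" unfolding WW[symmetric] using W Q
        by (simp add: assoc_mult_mat[of _ n n _ n _ n] mult_carrier_mat[of _ n n])
      also have "\<dots> = mat_trace ((W * Q) * W)" by (rule mat_trace_mult_comm[of _ n n], insert W Q, auto)
      finally show ?thesis unfolding Wh using W Q by (simp add: assoc_mult_mat[of _ n n _ n _ n] mult_carrier_mat[of _ n n])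
    qed
    moreover have "Re (mat_trace (mat_adjoint W * Q * W)) \<ge> 0" by (rule mat_trace_psd[OF W Q Qpsd])
    ultimately show ?thesis unfolding e1 by simp
  qed
  define Q1 where "Q1 = W * Z * V"
  have Q1: "Q1 \<in> carrier_mat n n" unfolding Q1_def using car3[OF W Z V] .
  have Q_le: "Re (mat_trace (mat_adjoint Q1 * Q1)) \<le> (a + b) * Re (mat_trace (A * Z)) - a * b * Re (mat_trace A)"
  proof -
    have adjQ1: "mat_adjoint Q1 = mat_adjoint V * (Z * W)"
    proof -
      have "mat_adjoint Q1 = mat_adjoint V * mat_adjoint (W * Z)" unfolding Q1_def
        by (rule adj_mult[of _ n n _ n], insert W Z V, auto)
      also have "mat_adjoint (W * Z) = Z * W" using adj_mult[OF W Z] Wh Z_herm by simp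
      finally show ?thesis .
    qed
    have "mat_trace (mat_adjoint Q1 * Q1) = mat_trace ((mat_adjoint V * (Z * W)) * Q1)" by (simp only: adjQ1)
    also have "\<dots> = mat_trace (mat_adjoint V * ((Z * W) * (W * Z) * V))"
      unfolding Q1_def using V Va Z W by (simp add: assoc_mult_mat[of _ n n _ n _ n] mult_carrier_mat[of _ n n])
    also have "\<dots> = mat_trace (((Z * W) * (W * Z) * V) * mat_adjoint V)"
      by (rule mat_trace_mult_comm[of _ n n], insert V Va Z W, auto)
    also have "\<dots> = mat_trace ((Z * W) * (W * Z))" using V Va Z W UUV
      by (simp add: assoc_mult_mat[of _ n n _ n _ n] mult_carrier_mat[of _ n n])
    also have "\<dots> = mat_trace ((W * Z) * (Z * W))" by (rule mat_trace_mult_comm[of _ n n], insert Z W, auto)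
    also have "\<dots> = mat_trace (mat_adjoint W * (Z * Z) * W)" unfolding Wh using Z W
      by (simp add: assoc_mult_mat[of _ n n _ n _ n] mult_carrier_mat[of _ n n])
    also have "\<dots> = (\<Sum>j<n. qf (Z * Z) (col W j))" by (rule mat_trace_qf[OF W], insert Z, simp)
    finally have e1: "Re (mat_trace (mat_adjoint Q1 * Q1)) = (\<Sum>j<n. Re (qf (Z * Z) (col W j)))" by (simp add: Re_sum)
    have "(\<Sum>j<n. Re (qf (Z * Z) (col W j))) \<le> (\<Sum>j<n. (a + b) * Re (qf Z (col W j)) - a * b * nsq (col W j))"
      by (rule sum_mono, rule Z_facts(3), insert W, auto)
    also have "\<dots> = (a + b) * (\<Sum>j<n. Re (qf Z (col W j))) - a * b * (\<Sum>j<n. Re (qf (1\<^sub>m n) (col W j)))"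
      using W by (simp add: sum_subtractf sum_distrib_left qf_one)
    also have "(\<Sum>j<n. Re (qf Z (col W j))) = Re (mat_trace (mat_adjoint W * Z * W))"
      unfolding mat_trace_qf[OF W Z] Re_sum ..
    also have "(\<Sum>j<n. Re (qf (1\<^sub>m n) (col W j))) = Re (mat_trace (mat_adjoint W * 1\<^sub>m n * W))"
      unfolding mat_trace_qf[OF W one_carrier_mat] Re_sum ..
    also have "mat_trace (mat_adjoint W * 1\<^sub>m n * W) = mat_trace A" unfolding Wh WW[symmetric] using W by simp
    also have "mat_trace (mat_adjoint W * Z * W) = mat_trace (A * Z)"
    proof -
      have "mat_trace (mat_adjoint W * Z * W) = mat_trace (W * (Z * W))" unfolding Wh using W Z
        by (simp add: assoc_mult_mat[of _ n n _ n _ n] mult_carrier_mat[of _ n n])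
      also have "\<dots> = mat_trace ((Z * W) * W)" by (rule mat_trace_mult_comm[of _ n n], insert Z W, auto)
      also have "\<dots> = mat_trace (Z * A)" unfolding WW[symmetric] using Z W by (simp add: assoc_mult_mat[of _ n n _ n _ n] mult_carrier_mat[of _ n n])
      also have "\<dots> = mat_trace (A * Z)" by (rule mat_trace_mult_comm[of _ n n], insert Z A, auto)
      finally show ?thesis .
    qed
    finally show ?thesis unfolding e1 .
  qed
  define P1 where "P1 = W * U'"
  have P1: "P1 \<in> carrier_mat n n" unfolding P1_def using W U' by simp
  have cross: "mat_adjoint P1 * Q1 = mat_adjoint U' * X * V"
  proof -
    have "mat_adjoint P1 = mat_adjoint U' * W" unfolding P1_def using adj_mult[OF W U'] Wh by simp
    thus ?thesis unfolding Q1_def X_def WW[symmetric] using U'a W Z V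
      by (simp add: assoc_mult_mat[of _ n n _ n _ n] mult_carrier_mat[of _ n n])
  qed
  have PP: "mat_adjoint P1 * P1 = mat_adjoint U' * A * U'"
  proof -
    have "mat_adjoint P1 = mat_adjoint U' * W" unfolding P1_def using adj_mult[OF W U'] Wh by simp
    thus ?thesis unfolding P1_def WW[symmetric] using U'a W U'
      by (simp add: assoc_mult_mat[of _ n n _ n _ n] mult_carrier_mat[of _ n n])
  qed
  have Strace: "Re (mat_trace (mat_adjoint P1 * Q1)) = (\<Sum>i<n. sqrt (m i))"
    unfolding cross T1 mat_trace_dmat s_def by simp
  have t: "sqrt (a * b) > 0" using ab by simp
  from trace_amgm[OF P1 Q1 t] have amgm:
    "2 * (\<Sum>i<n. sqrt (m i)) \<le> sqrt (a * b) * Re (mat_trace (mat_adjoint U' * A * U')) + Re (mat_trace (mat_adjoint Q1 * Q1)) / sqrt (a * b)"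
    unfolding Strace PP .
  have tn': "trace_norm (A * Z) = (\<Sum>i<n. sqrt (m i))" using tn unfolding X_def .
  from kant_final[OF ab amgm P_le Q_le] show ?thesis unfolding tn' .
qed
end


theorem corollary1p4:
  fixes n :: nat and A Z :: "complex mat" and a b :: real
  assumes "n > 0"
    and "A \<in> carrier_mat n n" and "Z \<in> carrier_mat n n"
    and "psd_mat n A" and "pd_mat n Z"
    and "a = Max (Re ` spectrum Z)" and "b = Min (Re ` spectrum Z)"
  shows "op_norm (A * Z) \<le> (a + b) / (2 * sqrt (a * b)) * spectral_radius (A * Z) \<and>
         trace_norm (A * Z) \<le> (a + b) / (2 * sqrt (a * b)) * Re (mat_trace (A * Z))"
  using op_part[OF assms] tr_part[OF assms] by blast

end
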